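(* In the setting described in the context, suppose conditions (E) and (M) hold. Then for any compact set $A\subset\Omega$ with $|A|>0$ and any $\delta>0$, as $N\to\infty$, \[ \mathbb P_N\big[\max_AX\le(\gamma_*-\delta)\log\epsilon_N^{-1}\big]\to0. \]
   Context: $\Omega\subset\mathbb R^d$ is a bounded, simply connected open set with smooth boundary; $|\cdot|$ is Lebesgue measure; $\gamma_*=\sqrt{2d}$. For each $N$, $\mathbb P_N$ (expectation $\mathbb E_N$) is a probability measure under which the canonical process $X$ is a random function on $\Omega$ that is integrable, bounded above and upper semicontinuous (so it attains its maximum on compact sets), and which approximates a Gaussian log-correlated field on $\Omega$ in the sense that for each $f\in C_c^\infty(\Omega)$ the law of $\int fX$ converges to that of the Gaussian field with covariance $\log|x-y|^{-1}+g(x,y)$, $g$ continuous, bounded above, $L^2$. For $\gamma>0$ let $\mu_N^\gamma(dx)=\frac{e^{\gamma X(x)}}{\mathbb E_N[e^{\gamma X(x)}]}dx$. Condition (E): there is a sequence $\epsilon_N>0$, $\epsilon_N\to0$, such that for every $\gamma>0$ there is $R_\gamma>0$ with $\mathbb E_N[e^{\gamma X(x)}]\le R_\gamma\epsilon_N^{-\gamma^2/2}$ for all $x\in\Omega$, $N$, and for every compact $A\subset\Omega$ there is $C_{\gamma,A}>0$ with $\mathbb E_N[e^{\gamma X(x)}]\ge C_{\gamma,A}^{-1}\epsilon_N^{-\gamma^2/2}$ for all $x\in A$. Condition (M): for any $\gamma<\gamma_*$ and any fixed Borel set $A\subseteq\Omega$ with $|A|>0$, $\mu_N^\gamma(A)$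 under $\mathbb P_N$ converges in distribution as $N\to\infty$ to a random variable $\zeta_A^\gamma$ with $\mathbb P[0<\zeta_A^\gamma<\infty]=1$. *)

theory Defs
  imports "HOL-Analysis.Analysis" "HOL-Probability.Probability"
begin

fun Ck_on :: "nat \<Rightarrow> 'a::euclidean_space set \<Rightarrow> ('a \<Rightarrow> real) \<Rightarrow> bool" where
  "Ck_on 0 S f = continuous_on S f"
| "Ck_on (Suc k) S f = (continuous_on S f \<and> f differentiable_on S \<and>
      (\<forall>v. Ck_on k S (\<lambda>x. frechet_derivative f (at x) v)))"

definition smooth_on :: "'a::euclidean_space set \<Rightarrow> ('a \<Rightarrow> real) \<Rightarrow> bool" where
  "smooth_on S f \<longleftrightarrow> (\<forall>k. Ck_on k S f)"

definition test_function :: "'a::euclidean_space set \<Rightarrow> ('a \<Rightarrow> real) \<Rightarrow> bool" where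
  "test_function \<Omega> f \<longleftrightarrow> smooth_on UNIV f \<and> compact (closure {x. f x \<noteq> 0})
      \<and> closure {x. f x \<noteq> 0} \<subseteq> \<Omega>"

definition smooth_boundary :: "'a::euclidean_space set \<Rightarrow> bool" where
  "smooth_boundary \<Omega> \<longleftrightarrow> (\<forall>p\<in>frontier \<Omega>. \<exists>r>0. \<exists>\<phi>. smooth_on UNIV \<phi> \<and>
      frechet_derivative \<phi> (at p) \<noteq> (\<lambda>v. 0) \<and>
      \<Omega> \<inter> ball p r = {x\<in>ball p r. \<phi> x < 0})"

definition usc_on :: "'a::topological_space set \<Rightarrow> ('a \<Rightarrow> real) \<Rightarrow> bool" where
  "usc_on S h \<longleftrightarrow> (\<forall>x\<in>S. \<forall>t>h x. \<forall>\<^sub>F y in at x within S. h y < t)"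

definition gaussian_law :: "real \<Rightarrow> real measure" where
  "gaussian_law s = (if s = 0 then return borel 0 else density lborel (normal_density 0 (sqrt s)))"

definition gamma_star :: "'a::euclidean_space itself \<Rightarrow> real" where
  "gamma_star _ = sqrt (2 * real DIM('a))"

definition expmom :: "'w measure \<Rightarrow> ('w \<Rightarrow> 'a \<Rightarrow> real) \<Rightarrow> real \<Rightarrow> 'a \<Rightarrow> real" where
  "expmom P X \<gamma> x = (\<integral>\<omega>. exp (\<gamma> * X \<omega> x) \<partial>P)"

definition gmc :: "'w measure \<Rightarrow> ('w \<Rightarrow> 'a::euclidean_space \<Rightarrow> real) \<Rightarrow> real \<Rightarrow> 'a set \<Rightarrow> 'w \<Rightarrow> real" where
  "gmc P X \<gamma> A \<omega> = (LBINT x:A. exp (\<gamma> * X \<omega> x) / expmom P X \<gamma> x)"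

end

theory Submission
  imports Defs
begin

lemma usc_joint:
  fixes X :: "'w \<Rightarrow> 'a::euclidean_space \<Rightarrow> real" and M :: "'w measure"
  assumes op: "open \<Omega>"
    and bdd: "\<And>\<omega>. bdd_above (X \<omega> ` \<Omega>)"
    and usc: "\<And>\<omega>. usc_on \<Omega> (X \<omega>)"
    and mm: "\<And>K t. compact K \<Longrightarrow> K \<subseteq> \<Omega> \<Longrightarrow> {\<omega> \<in> space M. \<forall>x\<in>K. X \<omega> x \<le> t} \<in> sets M"
  shows "\<exists>\<Phi>. \<Phi> \<in> borel_measurable (M \<Otimes>\<^sub>M lborel) \<and> (\<forall>\<omega> x. x \<in> \<Omega> \<longrightarrow> \<Phi> (\<omega>, x) = X \<omega> x)"
proof -
  obtain D :: "'a set" where D: "countable D" "\<And>U. open U \<Longrightarrow> U \<noteq> {} \<Longrightarrow> \<exists>d\<in>D. d \<in> U"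
    by (rule countable_dense_setE) blast
  define I where "I = {(q, r). q \<in> D \<and> r \<in> \<rat> \<and> r > 0 \<and> cball q r \<subseteq> \<Omega>}"
  have cI: "countable I"
  proof -
    have "I \<subseteq> D \<times> \<rat>" by (auto simp: I_def)
    moreover have "countable (D \<times> \<rat>)" using D(1) countable_rat by blast
    ultimately show ?thesis by (rule countable_subset)
  qed
  define S where "S i \<omega> = Sup (X \<omega> ` cball (fst i) (snd i))" for i \<omega>
  have Smeas: "S i \<in> borel_measurable M" if iI0: "i \<in> I" for i
  proof -
    obtain q r where i: "i = (q, r)" "cball q r \<subseteq> \<Omega>" "r > 0" using iI0 by (auto simp: I_def)
    have ne: "cball q r \<noteq> {}" using i by auto
    have bd: "bdd_above (X \<omega> ` cball q r)" for \<omega>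
      using bdd[of \<omega>] i(2) by (meson bdd_above_mono image_mono)
    show ?thesis unfolding borel_measurable_iff_le
    proof
      fix t
      have "{w \<in> space M. S i w \<le> t} = {\<omega> \<in> space M. \<forall>x\<in>cball q r. X \<omega> x \<le> t}"
        using ne bd by (auto simp: S_def i cSUP_le_iff)
      then show "{w \<in> space M. S i w \<le> t} \<in> sets M" using mm[of "cball q r" t] i by auto
    qed
  qed
  define F where "F i p = (if snd p \<in> cball (fst i) (snd i) then ereal (S i (fst p)) else \<infinity>)" for i p
  have Fmeas: "F i \<in> borel_measurable (M \<Otimes>\<^sub>M lborel)" if "i \<in> I" for i
  proof -
    have [measurable]: "S i \<in> borel_measurable M" using Smeas that .
    have [measurable]: "cball (fst i) (snd i) \<in> sets borel" by (simp add: borel_closed)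
    show ?thesis unfolding F_def by measurable
  qed
  define \<Phi> where "\<Phi> p = real_of_ereal (INF i\<in>I. F i p)" for p
  have "\<Phi> \<in> borel_measurable (M \<Otimes>\<^sub>M lborel)"
    unfolding \<Phi>_def by (intro borel_measurable_real_of_ereal borel_measurable_INF cI Fmeas)
  moreover have "\<Phi> (\<omega>, x) = X \<omega> x" if x: "x \<in> \<Omega>" for \<omega> x
  proof -
    have "(INF i\<in>I. F i (\<omega>, x)) = ereal (X \<omega> x)"
    proof (rule antisym)
      show "ereal (X \<omega> x) \<le> (INF i\<in>I. F i (\<omega>, x))"
      proof (rule INF_greatest)
        fix i assume "i \<in> I"
        then obtain q r where i: "i = (q, r)" "cball q r \<subseteq> \<Omega>" by (auto simp: I_def)
        have bd: "bdd_above (X \<omega> ` cball q r)"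
          using bdd[of \<omega>] i(2) by (meson bdd_above_mono image_mono)
        show "ereal (X \<omega> x) \<le> F i (\<omega>, x)"
          using bd by (auto simp: F_def S_def i intro!: cSUP_upper)
      qed
      show "(INF i\<in>I. F i (\<omega>, x)) \<le> ereal (X \<omega> x)"
      proof (rule dense_ge)
        fix y assume y: "ereal (X \<omega> x) < y"
        show "(INF i\<in>I. F i (\<omega>, x)) \<le> y"
        proof (cases y)
          case PInf then show ?thesis by simp
        next
          case MInf then show ?thesis using y by simp
        next
          case (real t)
          with y have xt: "X \<omega> x < t" by simp
          have "\<forall>\<^sub>F z in at x within \<Omega>. X \<omega> z < t" using usc[of \<omega>] x xt by (auto simp: usc_on_def)
          then obtain d where d: "d > 0" "\<And>z. z \<in> \<Omega> \<Longrightarrow> z \<noteq> x \<Longrightarrow> dist z x < d \<Longrightarrow> X \<omega> z < t"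
            by (auto simp: eventually_at)
          obtain e where e: "e > 0" "ball x e \<subseteq> \<Omega>" using op x open_contains_ball by blast
          define e' where "e' = min d e"
          have e': "e' > 0" using d e by (simp add: e'_def)
          obtain r where r: "r \<in> \<rat>" "0 < r" "r < e' / 3" using Rats_dense_in_real[of 0 "e'/3"] e' by auto
          obtain q where q: "q \<in> D" "q \<in> ball x r" using D(2)[of "ball x r"] r by auto
          have sub: "cball q r \<subseteq> ball x e'"
          proof
            fix z assume "z \<in> cball q r"
            then have "dist q z \<le> r" by simp
            moreover have "dist x q < r" using q by simp
            ultimately have "dist x z < e'" using r dist_triangle[of x z q] by linarith
            then show "z \<in> ball x e'" by simp
          qed
          have "ball x e' \<subseteq> ball x e" unfolding e'_def by auto
          then have sub2: "cball q r \<subseteq> \<Omega>" using sub e by blast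
          have iI: "(q, r) \<in> I" using q r sub2 by (auto simp: I_def)
          have xin: "x \<in> cball q r" using q by (simp add: dist_commute)
          have bd: "bdd_above (X \<omega> ` cball q r)"
            using bdd[of \<omega>] sub2 by (meson bdd_above_mono image_mono)
          have "S (q, r) \<omega> \<le> t" unfolding S_def
          proof (simp, rule cSUP_least)
            show "cball q r \<noteq> {}" using xin by blast
            fix z assume z: "z \<in> cball q r"
            show "X \<omega> z \<le> t"
            proof (cases "z = x")
              case True then show ?thesis using xt by simp
            next
              case False
              have "dist z x < d" using z sub unfolding e'_def by (auto simp: dist_commute)
              then show ?thesis using d(2)[of z] False z sub2 by force
            qed
          qed
          then have "F (q, r) (\<omega>, x) \<le> y" using xin real by (simp add: F_def)
          then show ?thesis by (meson INF_lower iI order_trans)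
        qed
      qed
    qed
    then show ?thesis by (simp add: \<Phi>_def)
  qed
  ultimately show ?thesis by blast
qed


theorem theorem3p5:
  fixes \<Omega> :: "'a::euclidean_space set"
    and P :: "nat \<Rightarrow> 'w measure"
    and X :: "'w \<Rightarrow> 'a \<Rightarrow> real"
    and g :: "'a \<Rightarrow> 'a \<Rightarrow> real"
    and \<epsilon> :: "nat \<Rightarrow> real"
    and A :: "'a set" and \<delta> :: real
  assumes Omega: "open \<Omega>" "bounded \<Omega>" "simply_connected \<Omega>" "smooth_boundary \<Omega>"
    and prob: "\<And>N. prob_space (P N)"
    and meas: "\<And>N x. x \<in> \<Omega> \<Longrightarrow> (\<lambda>\<omega>. X \<omega> x) \<in> borel_measurable (P N)"
    and max_meas: "\<And>N K t. compact K \<Longrightarrow> K \<subseteq> \<Omega> \<Longrightarrow>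
        {\<omega> \<in> space (P N). \<forall>x\<in>K. X \<omega> x \<le> t} \<in> sets (P N)"
    and X_int: "\<And>\<omega>. set_integrable lborel \<Omega> (X \<omega>)"
    and X_bdd: "\<And>\<omega>. bdd_above (X \<omega> ` \<Omega>)"
    and X_usc: "\<And>\<omega>. usc_on \<Omega> (X \<omega>)"
    and g_cont: "continuous_on (\<Omega> \<times> \<Omega>) (\<lambda>(x, y). g x y)"
    and g_bdd: "bdd_above ((\<lambda>(x, y). g x y) ` (\<Omega> \<times> \<Omega>))"
    and g_L2: "set_integrable lborel (\<Omega> \<times> \<Omega>) (\<lambda>(x, y). (g x y)\<^sup>2)"
    and conv: "\<And>f. test_function \<Omega> f \<Longrightarrow>
        weak_conv_m (\<lambda>N. distr (P N) borel (\<lambda>\<omega>. LBINT x:\<Omega>. f x * X \<omega> x))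
          (gaussian_law (LBINT x:\<Omega>. LBINT y:\<Omega>. f x * f y * (ln (1 / dist x y) + g x y)))"
    and eps_pos: "\<And>N. \<epsilon> N > 0"
    and eps_lim: "\<epsilon> \<longlonglongrightarrow> 0"
    and E_upper: "\<And>\<gamma>. \<gamma> > 0 \<Longrightarrow> \<exists>R>0. \<forall>N. \<forall>x\<in>\<Omega>.
        integrable (P N) (\<lambda>\<omega>. exp (\<gamma> * X \<omega> x)) \<and>
        expmom (P N) X \<gamma> x \<le> R * \<epsilon> N powr (- \<gamma>\<^sup>2 / 2)"
    and E_lower: "\<And>\<gamma> K. \<gamma> > 0 \<Longrightarrow> compact K \<Longrightarrow> K \<subseteq> \<Omega> \<Longrightarrow> \<exists>C>0. \<forall>N. \<forall>x\<in>K.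
        expmom (P N) X \<gamma> x \<ge> (1 / C) * \<epsilon> N powr (- \<gamma>\<^sup>2 / 2)"
    and M: "\<And>\<gamma> B. 0 < \<gamma> \<Longrightarrow> \<gamma> < gamma_star TYPE('a) \<Longrightarrow> B \<in> sets borel \<Longrightarrow>
        B \<subseteq> \<Omega> \<Longrightarrow> measure lborel B > 0 \<Longrightarrow>
        \<exists>\<nu>. real_distribution \<nu> \<and> weak_conv_m (\<lambda>N. distr (P N) borel (gmc (P N) X \<gamma> B)) \<nu>
            \<and> measure \<nu> {0<..} = 1"
    and A: "compact A" "A \<subseteq> \<Omega>" "measure lborel A > 0"
    and delta: "\<delta> > 0"
  shows "(\<lambda>N. measure (P N) {\<omega> \<in> space (P N).
            (SUP x\<in>A. X \<omega> x) \<le> (gamma_star TYPE('a) - \<delta>) * ln (1 / \<epsilon> N)}) \<longlonglongrightarrow> 0"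
proof -
  define gs where "gs = gamma_star TYPE('a)"
  have gs_pos: "gs > 0" unfolding gs_def gamma_star_def by simp
  define a where "a = gs - \<delta>"
  define b where "b = max a 0"
  have b: "b < gs" "0 \<le> b" "a \<le> b" using delta gs_pos by (auto simp: b_def a_def)
  define \<gamma> where "\<gamma> = (b + gs) / 2"
  define \<gamma>' where "\<gamma>' = (b + \<gamma>) / 2"
  have g1: "0 < \<gamma>'" "\<gamma>' < \<gamma>" "\<gamma> < gs" "a < (\<gamma> + \<gamma>') / 2" "0 < \<gamma>"
    using b unfolding \<gamma>_def \<gamma>'_def by (auto simp: field_simps)
  define \<kappa> where "\<kappa> = (\<gamma> - \<gamma>') * ((\<gamma> + \<gamma>') / 2 - a)"
  have \<kappa>_pos: "\<kappa> > 0" using g1 unfolding \<kappa>_def by simp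
  have A_ne: "A \<noteq> {}" using A(3) by auto
  have A_borel[measurable]: "A \<in> sets borel" using A(1) by (simp add: compact_imp_closed borel_closed)
  have A_fin: "emeasure lborel A = ennreal (measure lborel A)"
  proof (rule emeasure_eq_ennreal_measure)
    show "emeasure lborel A \<noteq> \<top>" using emeasure_bounded_finite[OF compact_imp_bounded[OF A(1)]] by simp
  qed
  obtain C where C: "C > 0" "\<And>N x. x \<in> A \<Longrightarrow> expmom (P N) X \<gamma> x \<ge> (1 / C) * \<epsilon> N powr (- \<gamma>\<^sup>2 / 2)"
    using E_lower[of \<gamma> A] g1 A by blast
  obtain R where R: "R > 0" "\<And>N x. x \<in> \<Omega> \<Longrightarrow> integrable (P N) (\<lambda>\<omega>. exp (\<gamma>' * X \<omega> x))"
      "\<And>N x. x \<in> \<Omega> \<Longrightarrow> expmom (P N) X \<gamma>' x \<le> R * \<epsilon> N powr (- \<gamma>'\<^sup>2 / 2)"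
    using E_upper[of \<gamma>'] g1 by blast
  obtain \<nu> where \<nu>: "real_distribution \<nu>" "weak_conv_m (\<lambda>N. distr (P N) borel (gmc (P N) X \<gamma> A)) \<nu>"
      "measure \<nu> {0<..} = 1"
    using M[of \<gamma> A] g1 A_borel A unfolding gs_def by blast
  have key: "measure (P N) {\<omega> \<in> space (P N). (SUP x\<in>A. X \<omega> x) \<le> a * ln (1 / \<epsilon> N)}
      \<le> measure (P N) {\<omega> \<in> space (P N). gmc (P N) X \<gamma> A \<omega> \<le> \<eta>} + C * R * measure lborel A / \<eta> * \<epsilon> N powr \<kappa>
     \<and> gmc (P N) X \<gamma> A \<in> borel_measurable (P N)" if \<eta>: "\<eta> > 0" for N \<eta>
  proof -
    interpret prob_space "P N" by (rule prob)
    obtain \<Phi> where \<Phi>m[measurable]: "\<Phi> \<in> borel_measurable (P N \<Otimes>\<^sub>M lborel)"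
      and \<Phi>eq: "\<And>\<omega> x. x \<in> \<Omega> \<Longrightarrow> \<Phi> (\<omega>, x) = X \<omega> x"
      using usc_joint[OF Omega(1) X_bdd X_usc max_meas] by blast
    have sfP: "sigma_finite_measure (P N)" by (rule prob_space_imp_sigma_finite) (rule prob)
    define ll where "ll = ln (\<epsilon> N)"
    have pw: "\<epsilon> N powr s = exp (s * ll)" for s using eps_pos[of N] by (simp add: powr_def ll_def)
    have lnL: "ln (1 / \<epsilon> N) = - ll" using eps_pos[of N] by (simp add: ll_def ln_div)
    define m where "m x = (\<integral>\<omega>. exp (\<gamma> * \<Phi> (\<omega>, x)) \<partial>P N)" for x
    have m_meas[measurable]: "m \<in> borel_measurable lborel"
    proof -
      have "(\<lambda>(x, \<omega>). exp (\<gamma> * \<Phi> (\<omega>, x))) \<in> borel_measurable (lborel \<Otimes>\<^sub>M P N)"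
        by measurable
      then show ?thesis unfolding m_def
        by (rule sigma_finite_measure.borel_measurable_lebesgue_integral[OF sfP])
    qed
    have m_eq: "m x = expmom (P N) X \<gamma> x" if "x \<in> \<Omega>" for x
      using that by (simp add: m_def expmom_def \<Phi>eq)
    have m_nn: "m x \<ge> 0" for x unfolding m_def by (rule integral_nonneg_AE) auto
    have m_lb: "m x \<ge> (1 / C) * exp (- \<gamma>\<^sup>2 / 2 * ll)" if "x \<in> A" for x
      using C(2)[of x N] that A(2) m_eq[of x] pw by auto
    define G where "G \<omega> = (\<integral>x. indicator A x * (exp (\<gamma> * \<Phi> (\<omega>, x)) / m x) \<partial>lborel)" for \<omega>
    have G_eq: "gmc (P N) X \<gamma> A = G"
    proof
      fix \<omega> show "gmc (P N) X \<gamma> A \<omega> = G \<omega>"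
        unfolding gmc_def set_lebesgue_integral_def G_def
        by (rule Bochner_Integration.integral_cong) (use A(2) in \<open>auto simp: indicator_def \<Phi>eq m_eq\<close>)
    qed
    have G_meas: "G \<in> borel_measurable (P N)"
    proof -
      have "(\<lambda>(\<omega>, x). indicator A x * (exp (\<gamma> * \<Phi> (\<omega>, x)) / m x)) \<in> borel_measurable (P N \<Otimes>\<^sub>M lborel)"
        by measurable
      then show ?thesis unfolding G_def by (rule lborel.borel_measurable_lebesgue_integral)
    qed
    define W where "W \<omega> = (\<integral>\<^sup>+x. ennreal (indicator A x * exp (\<gamma>' * \<Phi> (\<omega>, x))) \<partial>lborel)" for \<omega>
    have W_meas[measurable]: "W \<in> borel_measurable (P N)"
    proof -
      have "(\<lambda>p. ennreal (indicator A (snd p) * exp (\<gamma>' * \<Phi> p))) \<in> borel_measurable (P N \<Otimes>\<^sub>M lborel)"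
        by measurable
      then show ?thesis unfolding W_def
        using sigma_finite_measure.borel_measurable_nn_integral_fst[OF sigma_finite_lborel] by fastforce
    qed
    define Rb where "Rb = R * exp (- \<gamma>'\<^sup>2 / 2 * ll)"
    have W_int: "(\<integral>\<^sup>+\<omega>. W \<omega> \<partial>P N) \<le> ennreal Rb * emeasure lborel A"
    proof -
      have pf: "pair_sigma_finite (P N) lborel"
        unfolding pair_sigma_finite_def using sfP sigma_finite_lborel by simp
      define f where "f p = ennreal (indicator A (snd p) * exp (\<gamma>' * \<Phi> p))" for p
      have fm: "f \<in> borel_measurable (P N \<Otimes>\<^sub>M lborel)" unfolding f_def by measurable
      have "(\<integral>\<^sup>+\<omega>. W \<omega> \<partial>P N) = (\<integral>\<^sup>+\<omega>. (\<integral>\<^sup>+x. f (\<omega>, x) \<partial>lborel) \<partial>P N)"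
        by (simp add: W_def f_def)
      also have "\<dots> = (\<integral>\<^sup>+x. (\<integral>\<^sup>+\<omega>. f (\<omega>, x) \<partial>P N) \<partial>lborel)"
        by (rule pair_sigma_finite.Fubini[OF pf fm, symmetric])
      also have "\<dots> \<le> (\<integral>\<^sup>+x. ennreal Rb * indicator A x \<partial>lborel)"
      proof (rule nn_integral_mono)
        fix x :: 'a
        show "(\<integral>\<^sup>+\<omega>. f (\<omega>, x) \<partial>P N) \<le> ennreal Rb * indicator A x"
        proof (cases "x \<in> A")
          case True
          then have xO: "x \<in> \<Omega>" using A(2) by auto
          have "(\<integral>\<^sup>+\<omega>. f (\<omega>, x) \<partial>P N) = (\<integral>\<^sup>+\<omega>. ennreal (exp (\<gamma>' * X \<omega> x)) \<partial>P N)"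
            using True xO by (simp add: f_def \<Phi>eq)
          also have "\<dots> = ennreal (expmom (P N) X \<gamma>' x)"
            unfolding expmom_def by (rule nn_integral_eq_integral[OF R(2)[OF xO]]) auto
          also have "\<dots> \<le> ennreal Rb"
            using R(3)[OF xO, of N] by (intro ennreal_leI) (simp add: Rb_def pw)
          finally show ?thesis using True by simp
        next
          case False
          then show ?thesis by (simp add: f_def)
        qed
      qed
      also have "\<dots> = ennreal Rb * emeasure lborel A"
        by (rule nn_integral_cmult_indicator) simp
      finally show ?thesis .
    qed
    define K where "K = C * exp (\<gamma>\<^sup>2 / 2 * ll) * exp (- (\<gamma> - \<gamma>') * a * ll)"
    have K_pos: "K > 0" using C(1) by (simp add: K_def)
    define S where "S = {\<omega> \<in> space (P N). ennreal \<eta> \<le> ennreal K * W \<omega>}"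
    have S_meas: "S \<in> sets (P N)" unfolding S_def by measurable
    have U_meas: "{\<omega> \<in> space (P N). G \<omega> \<le> \<eta>} \<in> sets (P N)" using G_meas by measurable
    have markov: "ennreal \<eta> * emeasure (P N) S \<le> ennreal K * (\<integral>\<^sup>+\<omega>. W \<omega> \<partial>P N)"
    proof -
      have "ennreal \<eta> * emeasure (P N) S = (\<integral>\<^sup>+\<omega>. ennreal \<eta> * indicator S \<omega> \<partial>P N)"
        by (rule nn_integral_cmult_indicator[symmetric]) (rule S_meas)
      also have "\<dots> \<le> (\<integral>\<^sup>+\<omega>. ennreal K * W \<omega> \<partial>P N)"
        by (rule nn_integral_mono) (auto simp: S_def indicator_def)
      also have "\<dots> = ennreal K * (\<integral>\<^sup>+\<omega>. W \<omega> \<partial>P N)"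
        by (rule nn_integral_cmult) (rule W_meas)
      finally show ?thesis .
    qed
    have incl: "{\<omega> \<in> space (P N). (SUP x\<in>A. X \<omega> x) \<le> a * ln (1 / \<epsilon> N)}
       \<subseteq> {\<omega> \<in> space (P N). G \<omega> \<le> \<eta>} \<union> S"
    proof
      fix \<omega> assume \<omega>: "\<omega> \<in> {\<omega> \<in> space (P N). (SUP x\<in>A. X \<omega> x) \<le> a * ln (1 / \<epsilon> N)}"
      then have \<omega>sp: "\<omega> \<in> space (P N)" by simp
      have bdA: "bdd_above (X \<omega> ` A)" using X_bdd[of \<omega>] A(2) by (meson bdd_above_mono image_mono)
      have Xle: "X \<omega> x \<le> - a * ll" if "x \<in> A" for x
        using \<omega> that A_ne bdA lnL by (auto simp: cSUP_le_iff)
      have \<Phi>x[measurable]: "(\<lambda>x. \<Phi> (\<omega>, x)) \<in> borel_measurable lborel"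
        using measurable_Pair2[OF \<Phi>m \<omega>sp] .
      show "\<omega> \<in> {\<omega> \<in> space (P N). G \<omega> \<le> \<eta>} \<union> S"
      proof (cases "\<omega> \<in> S")
        case True then show ?thesis by simp
      next
        case False
        then have lt: "ennreal K * W \<omega> < ennreal \<eta>" using \<omega>sp by (auto simp: S_def not_le)
        have pt: "exp (\<gamma> * X \<omega> x) / m x \<le> K * exp (\<gamma>' * X \<omega> x)" if x: "x \<in> A" for x
        proof -
          have h1: "exp (\<gamma> * X \<omega> x) \<le> exp (\<gamma>' * X \<omega> x) * exp (- (\<gamma> - \<gamma>') * a * ll)"
          proof -
            have "(\<gamma> - \<gamma>') * X \<omega> x \<le> (\<gamma> - \<gamma>') * (- a * ll)"
              using Xle[OF x] g1 by (intro mult_left_mono) auto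
            then have "\<gamma> * X \<omega> x \<le> \<gamma>' * X \<omega> x + (- (\<gamma> - \<gamma>') * a * ll)"
              by (simp add: algebra_simps)
            then show ?thesis by (simp add: exp_add[symmetric])
          qed
          have mpos: "(1 / C) * exp (- \<gamma>\<^sup>2 / 2 * ll) > 0" using C(1) by simp
          have h2: "1 / m x \<le> C * exp (\<gamma>\<^sup>2 / 2 * ll)"
          proof -
            have "1 / m x \<le> 1 / ((1 / C) * exp (- \<gamma>\<^sup>2 / 2 * ll))"
            proof (rule divide_left_mono)
              show "(1 / C) * exp (- \<gamma>\<^sup>2 / 2 * ll) \<le> m x" by (rule m_lb[OF x])
              have "m x > 0" using m_lb[OF x] mpos by linarith
              then show "0 < m x * ((1 / C) * exp (- \<gamma>\<^sup>2 / 2 * ll))" using mpos by (rule mult_pos_pos)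
            qed simp
            also have "\<dots> = C * exp (\<gamma>\<^sup>2 / 2 * ll)"
              by (simp add: exp_minus field_simps)
            finally show ?thesis .
          qed
          have "exp (\<gamma> * X \<omega> x) / m x = exp (\<gamma> * X \<omega> x) * (1 / m x)" by simp
          also have "\<dots> \<le> (exp (\<gamma>' * X \<omega> x) * exp (- (\<gamma> - \<gamma>') * a * ll)) * (C * exp (\<gamma>\<^sup>2 / 2 * ll))"
            using h1 h2 m_lb[OF x] mpos by (intro mult_mono) auto
          also have "\<dots> = K * exp (\<gamma>' * X \<omega> x)" by (simp add: K_def)
          finally show ?thesis .
        qed
        have "(\<integral>\<^sup>+x. ennreal (indicator A x * (exp (\<gamma> * \<Phi> (\<omega>, x)) / m x)) \<partial>lborel)
            \<le> (\<integral>\<^sup>+x. ennreal K * ennreal (indicator A x * exp (\<gamma>' * \<Phi> (\<omega>, x))) \<partial>lborel)"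
        proof (rule nn_integral_mono)
          fix x :: 'a
          show "ennreal (indicator A x * (exp (\<gamma> * \<Phi> (\<omega>, x)) / m x))
            \<le> ennreal K * ennreal (indicator A x * exp (\<gamma>' * \<Phi> (\<omega>, x)))"
          proof (cases "x \<in> A")
            case True
            then have xO: "x \<in> \<Omega>" using A(2) by auto
            show ?thesis using True pt[OF True] K_pos
              by (simp add: \<Phi>eq[OF xO] ennreal_mult[symmetric] ennreal_leI)
          next
            case False then show ?thesis by simp
          qed
        qed
        also have "\<dots> = ennreal K * W \<omega>"
          unfolding W_def by (rule nn_integral_cmult) measurable
        finally have le: "(\<integral>\<^sup>+x. ennreal (indicator A x * (exp (\<gamma> * \<Phi> (\<omega>, x)) / m x)) \<partial>lborel) \<le> ennreal \<eta>"
          using lt by simp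
        have "G \<omega> = enn2real (\<integral>\<^sup>+x. ennreal (indicator A x * (exp (\<gamma> * \<Phi> (\<omega>, x)) / m x)) \<partial>lborel)"
          unfolding G_def by (rule integral_eq_nn_integral) (auto intro!: divide_nonneg_nonneg m_nn)
        also have "\<dots> \<le> \<eta>" using le \<eta> by (simp add: enn2real_leI)
        finally show ?thesis using \<omega>sp by simp
      qed
    qed
    have "measure (P N) S \<le> C * R * measure lborel A / \<eta> * \<epsilon> N powr \<kappa>"
    proof -
      have KR: "K * Rb = C * R * \<epsilon> N powr \<kappa>"
      proof -
        have "K * Rb = C * R * (exp (\<gamma>\<^sup>2 / 2 * ll) * exp (- (\<gamma> - \<gamma>') * a * ll) * exp (- \<gamma>'\<^sup>2 / 2 * ll))"
          by (simp add: K_def Rb_def)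
        also have "exp (\<gamma>\<^sup>2 / 2 * ll) * exp (- (\<gamma> - \<gamma>') * a * ll) * exp (- \<gamma>'\<^sup>2 / 2 * ll) = exp (\<kappa> * ll)"
          unfolding exp_add[symmetric] \<kappa>_def by (simp add: algebra_simps power2_eq_square add_divide_distrib diff_divide_distrib)
        finally show ?thesis by (simp add: pw)
      qed
      have "ennreal (\<eta> * measure (P N) S) = ennreal \<eta> * emeasure (P N) S"
        using \<eta> by (simp add: emeasure_eq_measure ennreal_mult)
      also have "\<dots> \<le> ennreal K * (ennreal Rb * ennreal (measure lborel A))"
        using markov W_int A_fin by (metis mult_left_mono order_trans zero_le)
      also have "\<dots> = ennreal (K * Rb * measure lborel A)"
        using K_pos R(1) by (simp add: ennreal_mult Rb_def mult.assoc)
      finally have "\<eta> * measure (P N) S \<le> K * Rb * measure lborel A"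
        using K_pos R(1) by (subst (asm) ennreal_le_iff) (auto simp: Rb_def)
      then have "measure (P N) S \<le> K * Rb * measure lborel A / \<eta>"
        using \<eta> by (simp add: field_simps)
      then show ?thesis using KR by (simp add: mult_ac)
    qed
    moreover have "measure (P N) {\<omega> \<in> space (P N). (SUP x\<in>A. X \<omega> x) \<le> a * ln (1 / \<epsilon> N)}
       \<le> measure (P N) {\<omega> \<in> space (P N). G \<omega> \<le> \<eta>} + measure (P N) S"
      using finite_measure_mono[OF incl] measure_Un_le[OF U_meas S_meas] U_meas S_meas
      by (meson order_trans sets.Un)
    ultimately show ?thesis using G_eq G_meas by simp
  qed
  interpret \<nu>: real_distribution \<nu> by (rule \<nu>(1))
  have cdf0: "cdf \<nu> 0 = 0"
  proof -
    have "UNIV - {0::real<..} = {..0}" by auto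
    then have "measure \<nu> {..0} = 1 - measure \<nu> {0<..}"
      using \<nu>.prob_compl[of "{0<..}"] by simp
    then show ?thesis using \<nu>(3) by (simp add: cdf_def)
  qed
  have rc: "(cdf \<nu> \<longlongrightarrow> 0) (at_right 0)"
    using \<nu>.cdf_is_right_cont[of 0] cdf0 by (simp add: continuous_within)
  have mono_cdf: "mono (cdf \<nu>)" by (intro monoI \<nu>.cdf_nondecreasing)
  show ?thesis
  proof (rule order_tendstoI)
    fix e :: real assume "e < 0"
    then show "\<forall>\<^sub>F N in sequentially. e < measure (P N) {\<omega> \<in> space (P N).
            (SUP x\<in>A. X \<omega> x) \<le> (gamma_star TYPE('a) - \<delta>) * ln (1 / \<epsilon> N)}"
      by (simp add: less_le_trans[OF _ measure_nonneg])
  next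
    fix e :: real assume e: "0 < e"
    have "\<forall>\<^sub>F y in at_right 0. cdf \<nu> y < e / 2" using rc e by (intro order_tendstoD) auto
    then obtain \<eta>0 where \<eta>0: "\<eta>0 > 0" "\<And>y. 0 < y \<Longrightarrow> y < \<eta>0 \<Longrightarrow> cdf \<nu> y < e / 2"
      by (auto simp: eventually_at_right_field)
    obtain \<eta> where \<eta>: "\<eta> \<in> {0<..<\<eta>0}" "\<eta> \<notin> {x. \<not> isCont (cdf \<nu>) x}"
      using open_minus_countable[OF mono_ctble_discont[OF mono_cdf], of "{0<..<\<eta>0}"] \<eta>0 by auto
    have c1: "(\<lambda>N. cdf (distr (P N) borel (gmc (P N) X \<gamma> A)) \<eta>) \<longlonglongrightarrow> cdf \<nu> \<eta>"
      using \<nu>(2) \<eta>(2) unfolding weak_conv_m_def weak_conv_def by auto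
    have "cdf \<nu> \<eta> < e / 2" using \<eta>0 \<eta>(1) by auto
    then have ev1: "\<forall>\<^sub>F N in sequentially. cdf (distr (P N) borel (gmc (P N) X \<gamma> A)) \<eta> < e / 2"
      using c1 by (intro order_tendstoD) auto
    have "(\<lambda>N. \<epsilon> N powr \<kappa>) \<longlonglongrightarrow> 0"
      by (rule tendsto_zero_powrI[OF eps_lim tendsto_const]) (use eps_pos \<kappa>_pos in \<open>auto intro!: always_eventually less_imp_le\<close>)
    then have "(\<lambda>N. C * R * measure lborel A / \<eta> * \<epsilon> N powr \<kappa>) \<longlonglongrightarrow> 0"
      by (rule tendsto_mult_right_zero)
    then have ev2: "\<forall>\<^sub>F N in sequentially. C * R * measure lborel A / \<eta> * \<epsilon> N powr \<kappa> < e / 2"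
      using e by (intro order_tendstoD) auto
    show "\<forall>\<^sub>F N in sequentially. measure (P N) {\<omega> \<in> space (P N).
            (SUP x\<in>A. X \<omega> x) \<le> (gamma_star TYPE('a) - \<delta>) * ln (1 / \<epsilon> N)} < e"
      using ev1 ev2
    proof eventually_elim
      case (elim N)
      have k: "measure (P N) {\<omega> \<in> space (P N). (SUP x\<in>A. X \<omega> x) \<le> a * ln (1 / \<epsilon> N)}
        \<le> measure (P N) {\<omega> \<in> space (P N). gmc (P N) X \<gamma> A \<omega> \<le> \<eta>} + C * R * measure lborel A / \<eta> * \<epsilon> N powr \<kappa>"
        "gmc (P N) X \<gamma> A \<in> borel_measurable (P N)"
        using key[of \<eta> N] \<eta>(1) by auto
      have "cdf (distr (P N) borel (gmc (P N) X \<gamma> A)) \<eta> = measure (P N) {\<omega> \<in> space (P N). gmc (P N) X \<gamma> A \<omega> \<le> \<eta>}"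
        unfolding cdf_def using k(2) by (subst measure_distr) (auto intro!: arg_cong[where f="measure (P N)"])
      then show ?case using k(1) elim unfolding a_def gs_def by linarith
    qed
  qed
qed

end
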